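(* Let $\mathcal G$ be a connected groupoid and let $F:\mathbf 1\to\mathbf 1$ be a closed complete morphism of $\mathcal H^r(\mathcal G)$. Then for every $g\in\mathcal G$ there exists a morphism $F':H_g\to\mathbf 1$ of $\mathcal H^r(\mathcal G)$ such that $F=F'\circ L_g$.
   Context: Groupoid conventions: a groupoid $\mathcal G$ is a small category in which every morphism is invertible; it is connected if $\mathcal G(i,j)\neq\emptyset$ for all objects $i,j$; $\mathcal G(i,j)$ denotes the morphisms from $i$ to $j$; composition left to right ($g\in\mathcal G(i,j)$, $h\in\mathcal G(j,k)$ give $gh\in\mathcal G(i,k)$); $1_i$ identity, $\bar g$ inverse. Braided monoidal categories: product $\diamond$, unit $\mathbf 1$, braiding $\gamma_{A,B}$, $\bar\gamma_{A,B}:=\gamma_{B,A}^{-1}$; constraints suppressed; $\mathrm{id}_g=\mathrm{id}_{H_g}$, $\gamma_{g,h}=\gamma_{H_g,H_h}$, $\bar\gamma_{g,h}=\bar\gamma_{H_g,H_h}$. $\mathcal H^r(\mathcal G)$ is the braided monoidal category freely generated by objects $H_g$ ($g\in\mathcal G$) and morphisms $\Delta_g:H_g\to H_g\diamond H_g$, $\epsilon_g:H_g\to\mathbf 1$, $m_{g,h}:H_g\diamond H_h\to H_{gh}$, $\eta_i:\mathbf 1\to H_{1_i}$, $S_g,\bar S_g:H_g\to H_{\bar g}$, $l_i:H_{1_i}\to\mathbf 1$, $L_g:\mathbf 1\to H_g$, $v_g,v_g^{-1}:H_g\to H_g$, subject to (composable labels, $g\in\mathcal G(i,j)$): (Hopf)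 $\Delta$ coassociative; $(\epsilon_g\diamond\mathrm{id})\Delta_g=\mathrm{id}_g=(\mathrm{id}\diamond\epsilon_g)\Delta_g$; $m$ associative; $m_{g,1_j}(\mathrm{id}_g\diamond\eta_j)=\mathrm{id}_g=m_{1_i,g}(\eta_i\diamond\mathrm{id}_g)$; $(m_{g,h}\diamond m_{g,h})(\mathrm{id}_g\diamond\gamma_{g,h}\diamond\mathrm{id}_h)(\Delta_g\diamond\Delta_h)=\Delta_{gh}m_{g,h}$; $\epsilon_{gh}m_{g,h}=\epsilon_g\diamond\epsilon_h$; $\Delta_{1_i}\eta_i=\eta_i\diamond\eta_i$; $\epsilon_{1_i}\eta_i=\mathrm{id}_{\mathbf 1}$; $m_{\bar g,g}(S_g\diamond\mathrm{id}_g)\Delta_g=\eta_j\epsilon_g$; $m_{g,\bar g}(\mathrm{id}_g\diamond S_g)\Delta_g=\eta_i\epsilon_g$; $S_{\bar g}\bar S_g=\bar S_{\bar g}S_g=\mathrm{id}_g$. (Integrals) $(\mathrm{id}_{1_i}\diamond l_i)\Delta_{1_i}=\eta_il_i$; $m_{g,h}(L_g\diamond\mathrm{id}_h)=L_{gh}\epsilon_h$; $l_iL_{1_i}=\mathrm{id}_{\mathbf 1}=l_iS_{1_i}L_{1_i}$; $S_gL_g=L_{\bar g}$; $l_iS_{1_i}=l_i$. (Ribbon) $v_gv_g^{-1}=v_g^{-1}v_g=\mathrm{id}_g$; $\epsilon_gv_g=\epsilon_g$; $v_gL_g=L_g$; $S_gv_g=v_{\bar g}S_g$; $m_{g,h}(v_g\diamond\mathrm{id}_h)=v_{gh}m_{g,h}=m_{g,h}(\mathrm{id}_g\diamond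 v_h)$. Copairings $\sigma_{i,i}=(v_{1_i}^{-1}\diamond(v_{1_i}^{-1}S_{1_i}))\Delta_{1_i}v_{1_i}\eta_i$, $\sigma_{i,j}=\eta_i\diamond\eta_j$ ($i\neq j$). For $g\in\mathcal G(p,q)$, $h\in\mathcal G(r,s)$, $k\in\mathrm{Obj}\,\mathcal G$: $\mu_{g,h}=(m_{g,1_q}\diamond m_{1_r,h})(\mathrm{id}_g\diamond\sigma_{q,r}\diamond\mathrm{id}_h)$, $\rho^r_{g,k}=(m_{g,1_q}\diamond\mathrm{id}_{1_k})(\mathrm{id}_g\diamond\sigma_{q,k})$, $\rho^l_{g,k}=(\mathrm{id}_{1_k}\diamond m_{1_p,g})(\sigma_{k,p}\diamond\mathrm{id}_g)$. Required: each $\sigma_{i,j}$ is a Hopf copairing ($(\Delta_{1_i}\diamond\mathrm{id})\sigma_{i,j}=(\mathrm{id}\diamond\mathrm{id}\diamond m_{1_j,1_j})(\mathrm{id}\diamond\sigma_{i,j}\diamond\mathrm{id})\sigma_{i,j}$, $(\mathrm{id}\diamond\Delta_{1_j})\sigma_{i,j}=(m_{1_i,1_i}\diamond\mathrm{id}\diamond\mathrm{id})(\mathrm{id}\diamond\sigma_{i,j}\diamond\mathrm{id})\sigma_{i,j}$, $(\epsilon_{1_i}\diamond\mathrm{id})\sigma_{i,j}=\eta_j$, $(\mathrm{id}\diamond\epsilon_{1_j})\sigma_{i,j}=\eta_i$); $\Delta_gv_g^{-1}=\mu_{g,g}(v_g^{-1}\diamond v_g^{-1})\bar\gamma_{g,g}\Delta_g$;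 for $g\in\mathcal G(p,i)$, $h\in\mathcal G(j,s)$: $(m_{1_j,h}\diamond m_{g,1_i})(S_{1_j}\diamond(\mu_{h,g}\bar\gamma_{g,h}\mu_{g,h})\diamond S_{1_i})(\rho^l_{g,j}\diamond\rho^r_{h,i})=\gamma_{g,h}$. A morphism is closed if its source and target are $\mathbf 1$. A morphism of $\mathcal H^r(\mathcal G)$ is complete if, for an expression of it as a composite of $\diamond$-products of generating morphisms (identities, braidings and their inverses included), the set of labels $g\in\mathcal G$ such that $H_g$ occurs in the source or target of one of these generating morphisms generates, together with the identities of $\mathcal G$, the whole groupoid $\mathcal G$ (every non-identity element is a product of such labels and their inverses); this does not depend on the chosen expression. *)

theory Defs
  imports Main
begin

text \<open>A small groupoid given by its object set, morphism set, source, target,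
  composition (left to right: for g in G(i,j), h in G(j,k), g_cmp g h is in G(i,k)),
  identities and inverses.\<close>

record ('o, 'm) grpd =
  g_ob  :: "'o set"
  g_ar  :: "'m set"
  g_src :: "'m \<Rightarrow> 'o"
  g_tgt :: "'m \<Rightarrow> 'o"
  g_cmp :: "'m \<Rightarrow> 'm \<Rightarrow> 'm"
  g_ide :: "'o \<Rightarrow> 'm"
  g_inv :: "'m \<Rightarrow> 'm"

definition groupoid :: "('o, 'm) grpd \<Rightarrow> bool" where
  "groupoid G \<longleftrightarrow>
     (\<forall>g\<in>g_ar G. g_src G g \<in> g_ob G \<and> g_tgt G g \<in> g_ob G) \<and>
     (\<forall>i\<in>g_ob G. g_ide G i \<in> g_ar G \<and> g_src G (g_ide G i) = i \<and> g_tgt G (g_ide G i) = i) \<and>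
     (\<forall>g\<in>g_ar G. \<forall>h\<in>g_ar G. g_tgt G g = g_src G h \<longrightarrow>
        g_cmp G g h \<in> g_ar G \<and> g_src G (g_cmp G g h) = g_src G g \<and> g_tgt G (g_cmp G g h) = g_tgt G h) \<and>
     (\<forall>g\<in>g_ar G. \<forall>h\<in>g_ar G. \<forall>k\<in>g_ar G. g_tgt G g = g_src G h \<longrightarrow> g_tgt G h = g_src G k \<longrightarrow>
        g_cmp G (g_cmp G g h) k = g_cmp G g (g_cmp G h k)) \<and>
     (\<forall>g\<in>g_ar G. g_cmp G (g_ide G (g_src G g)) g = g \<and> g_cmp G g (g_ide G (g_tgt G g)) = g) \<and>
     (\<forall>g\<in>g_ar G. g_inv G g \<in> g_ar G \<and> g_src G (g_inv G g) = g_tgt G g \<and> g_tgt G (g_inv G g) = g_src G g \<and>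
        g_cmp G g (g_inv G g) = g_ide G (g_src G g) \<and> g_cmp G (g_inv G g) g = g_ide G (g_tgt G g))"

definition connected :: "('o, 'm) grpd \<Rightarrow> bool" where
  "connected G \<longleftrightarrow> (\<forall>i\<in>g_ob G. \<forall>j\<in>g_ob G. \<exists>g\<in>g_ar G. g_src G g = i \<and> g_tgt G g = j)"

inductive_set gen_closure :: "('o, 'm) grpd \<Rightarrow> 'm set \<Rightarrow> 'm set" for G X where
  gc_ide: "i \<in> g_ob G \<Longrightarrow> g_ide G i \<in> gen_closure G X"
| gc_gen: "x \<in> X \<Longrightarrow> x \<in> g_ar G \<Longrightarrow> x \<in> gen_closure G X"
| gc_inv: "x \<in> X \<Longrightarrow> x \<in> g_ar G \<Longrightarrow> g_inv G x \<in> gen_closure G X"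
| gc_cmp: "a \<in> gen_closure G X \<Longrightarrow> b \<in> gen_closure G X \<Longrightarrow> g_tgt G a = g_src G b \<Longrightarrow>
           g_cmp G a b \<in> gen_closure G X"

text \<open>Objects of the (strictified) braided monoidal category are words of labels:
  the list [g1,...,gn] stands for H_g1 \<diamond> ... \<diamond> H_gn, [] for the unit 1.
  Cmp f g is the composite f \<circ> g (g applied first); Tns is \<diamond>.
  Generators: Dlt = Delta, Eps = epsilon, Mul = m, Eta = eta, Ant = S, AntI = S-bar,
  Lint = l, Lco = L, Rib = v, RibI = v^{-1}.\<close>

datatype ('o, 'm) hterm =
    Idt "'m list"
  | Brd "'m list" "'m list"
  | BrdI "'m list" "'m list"
  | Cmp "('o, 'm) hterm" "('o, 'm) hterm"
  | Tns "('o, 'm) hterm" "('o, 'm) hterm"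
  | Dlt 'm
  | Eps 'm
  | Mul 'm 'm
  | Eta 'o
  | Ant 'm
  | AntI 'm
  | Lint 'o
  | Lco 'm
  | Rib 'm
  | RibI 'm

inductive wt :: "('o, 'm) grpd \<Rightarrow> ('o, 'm) hterm \<Rightarrow> 'm list \<Rightarrow> 'm list \<Rightarrow> bool" for G where
  wt_Idt: "set A \<subseteq> g_ar G \<Longrightarrow> wt G (Idt A) A A"
| wt_Brd: "set A \<subseteq> g_ar G \<Longrightarrow> set B \<subseteq> g_ar G \<Longrightarrow> wt G (Brd A B) (A @ B) (B @ A)"
| wt_BrdI: "set A \<subseteq> g_ar G \<Longrightarrow> set B \<subseteq> g_ar G \<Longrightarrow> wt G (BrdI A B) (B @ A) (A @ B)"
| wt_Cmp: "wt G g A B \<Longrightarrow> wt G f B C \<Longrightarrow> wt G (Cmp f g) A C"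
| wt_Tns: "wt G f A B \<Longrightarrow> wt G g C D \<Longrightarrow> wt G (Tns f g) (A @ C) (B @ D)"
| wt_Dlt: "g \<in> g_ar G \<Longrightarrow> wt G (Dlt g) [g] [g, g]"
| wt_Eps: "g \<in> g_ar G \<Longrightarrow> wt G (Eps g) [g] []"
| wt_Mul: "g \<in> g_ar G \<Longrightarrow> h \<in> g_ar G \<Longrightarrow> g_tgt G g = g_src G h \<Longrightarrow>
           wt G (Mul g h) [g, h] [g_cmp G g h]"
| wt_Eta: "i \<in> g_ob G \<Longrightarrow> wt G (Eta i) [] [g_ide G i]"
| wt_Ant: "g \<in> g_ar G \<Longrightarrow> wt G (Ant g) [g] [g_inv G g]"
| wt_AntI: "g \<in> g_ar G \<Longrightarrow> wt G (AntI g) [g] [g_inv G g]"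
| wt_Lint: "i \<in> g_ob G \<Longrightarrow> wt G (Lint i) [g_ide G i] []"
| wt_Lco: "g \<in> g_ar G \<Longrightarrow> wt G (Lco g) [] [g]"
| wt_Rib: "g \<in> g_ar G \<Longrightarrow> wt G (Rib g) [g] [g]"
| wt_RibI: "g \<in> g_ar G \<Longrightarrow> wt G (RibI g) [g] [g]"

definition i1 :: "'m \<Rightarrow> ('o, 'm) hterm" where "i1 g = Idt [g]"

definition sigma :: "('o, 'm) grpd \<Rightarrow> 'o \<Rightarrow> 'o \<Rightarrow> ('o, 'm) hterm" where
  "sigma G i j =
     (if i = j then
        Cmp (Tns (RibI (g_ide G i)) (Cmp (RibI (g_ide G i)) (Ant (g_ide G i))))
            (Cmp (Dlt (g_ide G i)) (Cmp (Rib (g_ide G i)) (Eta i)))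
      else Tns (Eta i) (Eta j))"

definition mu :: "('o, 'm) grpd \<Rightarrow> 'm \<Rightarrow> 'm \<Rightarrow> ('o, 'm) hterm" where
  "mu G g h =
     Cmp (Tns (Mul g (g_ide G (g_tgt G g))) (Mul (g_ide G (g_src G h)) h))
         (Tns (i1 g) (Tns (sigma G (g_tgt G g) (g_src G h)) (i1 h)))"

definition rhor :: "('o, 'm) grpd \<Rightarrow> 'm \<Rightarrow> 'o \<Rightarrow> ('o, 'm) hterm" where
  "rhor G g k =
     Cmp (Tns (Mul g (g_ide G (g_tgt G g))) (i1 (g_ide G k)))
         (Tns (i1 g) (sigma G (g_tgt G g) k))"

definition rhol :: "('o, 'm) grpd \<Rightarrow> 'm \<Rightarrow> 'o \<Rightarrow> ('o, 'm) hterm" where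
  "rhol G g k =
     Cmp (Tns (i1 (g_ide G k)) (Mul (g_ide G (g_src G g)) g))
         (Tns (sigma G k (g_src G g)) (i1 g))"

text \<open>Defining relations (instances are only used when both sides are well typed
  with the same source and target, see heq).\<close>

inductive ax :: "('o, 'm) grpd \<Rightarrow> ('o, 'm) hterm \<Rightarrow> ('o, 'm) hterm \<Rightarrow> bool" for G where
  cat_assoc: "ax G (Cmp (Cmp f g) h) (Cmp f (Cmp g h))"
| cat_idl: "ax G (Cmp (Idt B) f) f"
| cat_idr: "ax G (Cmp f (Idt A)) f"
| mon_assoc: "ax G (Tns (Tns f g) h) (Tns f (Tns g h))"
| mon_unitl: "ax G (Tns (Idt []) f) f"
| mon_unitr: "ax G (Tns f (Idt [])) f"
| mon_id: "ax G (Tns (Idt A) (Idt B)) (Idt (A @ B))"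
| mon_interchange: "ax G (Tns (Cmp f g) (Cmp f' g')) (Cmp (Tns f f') (Tns g g'))"
| br_inv1: "ax G (Cmp (BrdI A B) (Brd A B)) (Idt (A @ B))"
| br_inv2: "ax G (Cmp (Brd A B) (BrdI A B)) (Idt (B @ A))"
| br_hex1: "ax G (Brd (A @ B) C) (Cmp (Tns (Brd A C) (Idt B)) (Tns (Idt A) (Brd B C)))"
| br_hex2: "ax G (Brd A (B @ C)) (Cmp (Tns (Idt B) (Brd A C)) (Tns (Brd A B) (Idt C)))"
| br_nat: "wt G f A A' \<Longrightarrow> wt G g B B' \<Longrightarrow>
           ax G (Cmp (Brd A' B') (Tns f g)) (Cmp (Tns g f) (Brd A B))"
| h_coassoc: "ax G (Cmp (Tns (Dlt g) (i1 g)) (Dlt g)) (Cmp (Tns (i1 g) (Dlt g)) (Dlt g))"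
| h_counitl: "ax G (Cmp (Tns (Eps g) (i1 g)) (Dlt g)) (i1 g)"
| h_counitr: "ax G (Cmp (Tns (i1 g) (Eps g)) (Dlt g)) (i1 g)"
| h_assoc: "ax G (Cmp (Mul (g_cmp G g h) k) (Tns (Mul g h) (i1 k)))
                 (Cmp (Mul g (g_cmp G h k)) (Tns (i1 g) (Mul h k)))"
| h_unitr: "ax G (Cmp (Mul g (g_ide G (g_tgt G g))) (Tns (i1 g) (Eta (g_tgt G g)))) (i1 g)"
| h_unitl: "ax G (Cmp (Mul (g_ide G (g_src G g)) g) (Tns (Eta (g_src G g)) (i1 g))) (i1 g)"
| h_bialg: "ax G (Cmp (Tns (Mul g h) (Mul g h))
                      (Cmp (Tns (i1 g) (Tns (Brd [g] [h]) (i1 h))) (Tns (Dlt g) (Dlt h))))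
                 (Cmp (Dlt (g_cmp G g h)) (Mul g h))"
| h_epsmul: "ax G (Cmp (Eps (g_cmp G g h)) (Mul g h)) (Tns (Eps g) (Eps h))"
| h_deleta: "ax G (Cmp (Dlt (g_ide G i)) (Eta i)) (Tns (Eta i) (Eta i))"
| h_epseta: "ax G (Cmp (Eps (g_ide G i)) (Eta i)) (Idt [])"
| h_antl: "ax G (Cmp (Mul (g_inv G g) g) (Cmp (Tns (Ant g) (i1 g)) (Dlt g)))
                (Cmp (Eta (g_tgt G g)) (Eps g))"
| h_antr: "ax G (Cmp (Mul g (g_inv G g)) (Cmp (Tns (i1 g) (Ant g)) (Dlt g)))
                (Cmp (Eta (g_src G g)) (Eps g))"
| h_antinv1: "ax G (Cmp (Ant (g_inv G g)) (AntI g)) (i1 g)"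
| h_antinv2: "ax G (Cmp (AntI (g_inv G g)) (Ant g)) (i1 g)"
| i_left: "ax G (Cmp (Tns (i1 (g_ide G i)) (Lint i)) (Dlt (g_ide G i))) (Cmp (Eta i) (Lint i))"
| i_right: "ax G (Cmp (Mul g h) (Tns (Lco g) (i1 h))) (Cmp (Lco (g_cmp G g h)) (Eps h))"
| i_norm1: "ax G (Cmp (Lint i) (Lco (g_ide G i))) (Idt [])"
| i_norm2: "ax G (Cmp (Lint i) (Cmp (Ant (g_ide G i)) (Lco (g_ide G i)))) (Idt [])"
| i_antL: "ax G (Cmp (Ant g) (Lco g)) (Lco (g_inv G g))"
| i_antl: "ax G (Cmp (Lint i) (Ant (g_ide G i))) (Lint i)"
| r_inv1: "ax G (Cmp (Rib g) (RibI g)) (i1 g)"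
| r_inv2: "ax G (Cmp (RibI g) (Rib g)) (i1 g)"
| r_eps: "ax G (Cmp (Eps g) (Rib g)) (Eps g)"
| r_L: "ax G (Cmp (Rib g) (Lco g)) (Lco g)"
| r_ant: "ax G (Cmp (Ant g) (Rib g)) (Cmp (Rib (g_inv G g)) (Ant g))"
| r_mull: "ax G (Cmp (Mul g h) (Tns (Rib g) (i1 h))) (Cmp (Rib (g_cmp G g h)) (Mul g h))"
| r_mulr: "ax G (Cmp (Mul g h) (Tns (i1 g) (Rib h))) (Cmp (Rib (g_cmp G g h)) (Mul g h))"
| s_copair1: "ax G (Cmp (Tns (Dlt (g_ide G i)) (i1 (g_ide G j))) (sigma G i j))
                   (Cmp (Tns (Idt [g_ide G i, g_ide G i]) (Mul (g_ide G j) (g_ide G j)))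
                        (Cmp (Tns (i1 (g_ide G i)) (Tns (sigma G i j) (i1 (g_ide G j)))) (sigma G i j)))"
| s_copair2: "ax G (Cmp (Tns (i1 (g_ide G i)) (Dlt (g_ide G j))) (sigma G i j))
                   (Cmp (Tns (Mul (g_ide G i) (g_ide G i)) (Idt [g_ide G j, g_ide G j]))
                        (Cmp (Tns (i1 (g_ide G i)) (Tns (sigma G i j) (i1 (g_ide G j)))) (sigma G i j)))"
| s_copair3: "ax G (Cmp (Tns (Eps (g_ide G i)) (i1 (g_ide G j))) (sigma G i j)) (Eta j)"
| s_copair4: "ax G (Cmp (Tns (i1 (g_ide G i)) (Eps (g_ide G j))) (sigma G i j)) (Eta i)"
| r_twist: "ax G (Cmp (Dlt g) (RibI g))
                 (Cmp (mu G g g) (Cmp (Tns (RibI g) (RibI g)) (Cmp (BrdI [g] [g]) (Dlt g))))"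
| r_braid: "ax G (Cmp (Tns (Mul (g_ide G (g_src G h)) h) (Mul g (g_ide G (g_tgt G g))))
                      (Cmp (Tns (Ant (g_ide G (g_src G h)))
                                (Tns (Cmp (mu G h g) (Cmp (BrdI [h] [g]) (mu G g h)))
                                     (Ant (g_ide G (g_tgt G g)))))
                           (Tns (rhol G g (g_src G h)) (rhor G h (g_tgt G g)))))
                 (Brd [g] [h])"

inductive heq :: "('o, 'm) grpd \<Rightarrow> ('o, 'm) hterm \<Rightarrow> ('o, 'm) hterm \<Rightarrow> bool" for G where
  heq_ax: "ax G s t \<Longrightarrow> wt G s A B \<Longrightarrow> wt G t A B \<Longrightarrow> heq G s t"
| heq_refl: "wt G t A B \<Longrightarrow> heq G t t"
| heq_sym: "heq G s t \<Longrightarrow> heq G t s"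
| heq_trans: "heq G s t \<Longrightarrow> heq G t u \<Longrightarrow> heq G s u"
| heq_Cmp: "heq G f f' \<Longrightarrow> heq G g g' \<Longrightarrow> wt G (Cmp f g) A B \<Longrightarrow> heq G (Cmp f g) (Cmp f' g')"
| heq_Tns: "heq G f f' \<Longrightarrow> heq G g g' \<Longrightarrow> heq G (Tns f g) (Tns f' g')"

fun labels :: "('o, 'm) grpd \<Rightarrow> ('o, 'm) hterm \<Rightarrow> 'm set" where
  "labels G (Idt A) = set A"
| "labels G (Brd A B) = set A \<union> set B"
| "labels G (BrdI A B) = set A \<union> set B"
| "labels G (Cmp f g) = labels G f \<union> labels G g"
| "labels G (Tns f g) = labels G f \<union> labels G g"
| "labels G (Dlt g) = {g}"
| "labels G (Eps g) = {g}"
| "labels G (Mul g h) = {g, h, g_cmp G g h}"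
| "labels G (Eta i) = {g_ide G i}"
| "labels G (Ant g) = {g, g_inv G g}"
| "labels G (AntI g) = {g, g_inv G g}"
| "labels G (Lint i) = {g_ide G i}"
| "labels G (Lco g) = {g}"
| "labels G (Rib g) = {g}"
| "labels G (RibI g) = {g}"

definition complete :: "('o, 'm) grpd \<Rightarrow> ('o, 'm) hterm \<Rightarrow> bool" where
  "complete G t \<longleftrightarrow> g_ar G \<subseteq> gen_closure G (labels G t)"

end

theory Submission
  imports Defs
begin

fun ty :: "('o, 'm) grpd \<Rightarrow> ('o, 'm) hterm \<Rightarrow> ('m list \<times> 'm list) option" where
  "ty G (Idt A) = (if set A \<subseteq> g_ar G then Some (A, A) else None)"
| "ty G (Brd A B) = (if set A \<subseteq> g_ar G \<and> set B \<subseteq> g_ar G then Some (A @ B, B @ A) else None)"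
| "ty G (BrdI A B) = (if set A \<subseteq> g_ar G \<and> set B \<subseteq> g_ar G then Some (B @ A, A @ B) else None)"
| "ty G (Cmp f g) = (case ty G g of None \<Rightarrow> None | Some (A, B) \<Rightarrow>
     (case ty G f of None \<Rightarrow> None | Some (B', C) \<Rightarrow> if B' = B then Some (A, C) else None))"
| "ty G (Tns f g) = (case ty G f of None \<Rightarrow> None | Some (A, B) \<Rightarrow>
     (case ty G g of None \<Rightarrow> None | Some (C, D) \<Rightarrow> Some (A @ C, B @ D)))"
| "ty G (Dlt g) = (if g \<in> g_ar G then Some ([g], [g, g]) else None)"
| "ty G (Eps g) = (if g \<in> g_ar G then Some ([g], []) else None)"
| "ty G (Mul g h) = (if g \<in> g_ar G \<and> h \<in> g_ar G \<and> g_tgt G g = g_src G h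
     then Some ([g, h], [g_cmp G g h]) else None)"
| "ty G (Eta i) = (if i \<in> g_ob G then Some ([], [g_ide G i]) else None)"
| "ty G (Ant g) = (if g \<in> g_ar G then Some ([g], [g_inv G g]) else None)"
| "ty G (AntI g) = (if g \<in> g_ar G then Some ([g], [g_inv G g]) else None)"
| "ty G (Lint i) = (if i \<in> g_ob G then Some ([g_ide G i], []) else None)"
| "ty G (Lco g) = (if g \<in> g_ar G then Some ([], [g]) else None)"
| "ty G (Rib g) = (if g \<in> g_ar G then Some ([g], [g]) else None)"
| "ty G (RibI g) = (if g \<in> g_ar G then Some ([g], [g]) else None)"

lemma wt_ty1: "wt G t A B \<Longrightarrow> ty G t = Some (A, B)"
  by (induction rule: wt.induct) auto

lemma wt_ty2: "ty G t = Some (A, B) \<Longrightarrow> wt G t A B"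
proof (induction t arbitrary: A B)
  case (Cmp f g)
  then obtain B' where "ty G g = Some (A, B')" "ty G f = Some (B', B)"
    by (auto split: option.splits if_splits)
  then show ?case using Cmp.IH by (meson wt.wt_Cmp)
next
  case (Tns f g)
  then obtain A1 B1 C1 D1 where "ty G f = Some (A1, B1)" "ty G g = Some (C1, D1)" "A = A1 @ C1" "B = B1 @ D1"
    by (auto split: option.splits if_splits)
  then show ?case using Tns.IH by (metis wt.wt_Tns)
qed (auto split: if_splits intro: wt.intros)

lemma wt_ty: "wt G t A B \<longleftrightarrow> ty G t = Some (A, B)"
  using wt_ty1 wt_ty2 by metis

lemma ty_Cmp_Some: "ty G (Cmp f g) = Some (A, C) \<longleftrightarrow> (\<exists>B. ty G g = Some (A, B) \<and> ty G f = Some (B, C))"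
  by (auto split: option.splits if_splits)

lemma heq_ty: "heq G s t \<Longrightarrow> ty G s = ty G t \<and> ty G s \<noteq> None"
proof (induction rule: heq.induct)
  case (heq_ax s t A B) then show ?case by (simp add: wt_ty)
next
  case (heq_refl t A B) then show ?case by (simp add: wt_ty)
next
  case (heq_Cmp f f' g g' A B)
  then have "ty G (Cmp f g) = Some (A, B)" by (simp add: wt_ty)
  then obtain C where "ty G g = Some (A, C)" "ty G f = Some (C, B)" by (metis ty_Cmp_Some)
  then show ?case using heq_Cmp.IH by simp
next
  case (heq_Tns f f' g g') then show ?case
    by (cases "ty G f'"; cases "ty G g'") auto
qed (metis)+

lemma hax: "ax G s t \<Longrightarrow> ty G s = Some X \<Longrightarrow> ty G t = Some X \<Longrightarrow> heq G s t"
  by (cases X) (metis heq_ax wt_ty)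

lemma hrefl: "ty G t \<noteq> None \<Longrightarrow> heq G t t"
  by (metis heq_refl not_None_eq surj_pair wt_ty)

lemma hcmp: "heq G f f' \<Longrightarrow> heq G g g' \<Longrightarrow> ty G (Cmp f g) \<noteq> None \<Longrightarrow> heq G (Cmp f g) (Cmp f' g')"
  by (metis heq_Cmp not_None_eq surj_pair wt_ty)

lemmas htns = heq_Tns
lemmas hsym = heq_sym
declare heq_trans[trans]

locale GP =
  fixes G :: "('o, 'm) grpd"
  assumes gpd: "groupoid G"
begin

abbreviation hq (infix "\<approx>" 50) where "s \<approx> t \<equiv> heq G s t"

lemma src_ar[simp]: "g \<in> g_ar G \<Longrightarrow> g_src G g \<in> g_ob G"
  using gpd unfolding groupoid_def by blast
lemma tgt_ar[simp]: "g \<in> g_ar G \<Longrightarrow> g_tgt G g \<in> g_ob G"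
  using gpd unfolding groupoid_def by blast
lemma ide_ar[simp]: "i \<in> g_ob G \<Longrightarrow> g_ide G i \<in> g_ar G"
  using gpd unfolding groupoid_def by blast
lemma src_ide[simp]: "i \<in> g_ob G \<Longrightarrow> g_src G (g_ide G i) = i"
  using gpd unfolding groupoid_def by blast
lemma tgt_ide[simp]: "i \<in> g_ob G \<Longrightarrow> g_tgt G (g_ide G i) = i"
  using gpd unfolding groupoid_def by blast
lemma cmp_ar[simp]: "g \<in> g_ar G \<Longrightarrow> h \<in> g_ar G \<Longrightarrow> g_tgt G g = g_src G h \<Longrightarrow> g_cmp G g h \<in> g_ar G"
  using gpd unfolding groupoid_def by blast
lemma src_cmp[simp]: "g \<in> g_ar G \<Longrightarrow> h \<in> g_ar G \<Longrightarrow> g_tgt G g = g_src G h \<Longrightarrow> g_src G (g_cmp G g h) = g_src G g"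
  using gpd unfolding groupoid_def by blast
lemma tgt_cmp[simp]: "g \<in> g_ar G \<Longrightarrow> h \<in> g_ar G \<Longrightarrow> g_tgt G g = g_src G h \<Longrightarrow> g_tgt G (g_cmp G g h) = g_tgt G h"
  using gpd unfolding groupoid_def by blast
lemma assoc: "g \<in> g_ar G \<Longrightarrow> h \<in> g_ar G \<Longrightarrow> k \<in> g_ar G \<Longrightarrow> g_tgt G g = g_src G h \<Longrightarrow> g_tgt G h = g_src G k \<Longrightarrow>
    g_cmp G (g_cmp G g h) k = g_cmp G g (g_cmp G h k)"
  using gpd unfolding groupoid_def by blast
lemma cmp_ide_l[simp]: "g \<in> g_ar G \<Longrightarrow> g_cmp G (g_ide G (g_src G g)) g = g"
  using gpd unfolding groupoid_def by blast
lemma cmp_ide_r[simp]: "g \<in> g_ar G \<Longrightarrow> g_cmp G g (g_ide G (g_tgt G g)) = g"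
  using gpd unfolding groupoid_def by blast
lemma inv_ar[simp]: "g \<in> g_ar G \<Longrightarrow> g_inv G g \<in> g_ar G"
  using gpd unfolding groupoid_def by blast
lemma src_inv[simp]: "g \<in> g_ar G \<Longrightarrow> g_src G (g_inv G g) = g_tgt G g"
  using gpd unfolding groupoid_def by blast
lemma tgt_inv[simp]: "g \<in> g_ar G \<Longrightarrow> g_tgt G (g_inv G g) = g_src G g"
  using gpd unfolding groupoid_def by blast
lemma cmp_inv_r[simp]: "g \<in> g_ar G \<Longrightarrow> g_cmp G g (g_inv G g) = g_ide G (g_src G g)"
  using gpd unfolding groupoid_def by blast
lemma cmp_inv_l[simp]: "g \<in> g_ar G \<Longrightarrow> g_cmp G (g_inv G g) g = g_ide G (g_tgt G g)"
  using gpd unfolding groupoid_def by blast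

lemma inv_inv[simp]: "g \<in> g_ar G \<Longrightarrow> g_inv G (g_inv G g) = g"
proof -
  assume g: "g \<in> g_ar G"
  let ?h = "g_inv G g" let ?h' = "g_inv G ?h"
  have s: "g_src G ?h' = g_src G g" using g by simp
  have 1: "?h' = g_cmp G (g_ide G (g_src G g)) ?h'" by (metis cmp_ide_l inv_ar g s)
  have 2: "g_ide G (g_src G g) = g_cmp G g ?h" using g by simp
  have 3: "g_cmp G (g_cmp G g ?h) ?h' = g_cmp G g (g_cmp G ?h ?h')" using g by (intro assoc) auto
  have 4: "g_cmp G ?h ?h' = g_ide G (g_tgt G g)" using g by (metis cmp_inv_r inv_ar src_inv)
  show ?thesis using 1 2 3 4 g by (metis cmp_ide_r)
qed

lemma ty_ar: "ty G t = Some (A, B) \<Longrightarrow> set A \<subseteq> g_ar G \<and> set B \<subseteq> g_ar G"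
proof (induction t arbitrary: A B)
  case (Cmp f g)
  then obtain C where "ty G g = Some (A, C)" "ty G f = Some (C, B)" by (metis ty_Cmp_Some)
  then show ?case using Cmp.IH by blast
next
  case (Tns f g)
  then obtain A1 B1 C1 D1 where "ty G f = Some (A1, B1)" "ty G g = Some (C1, D1)" "A = A1 @ C1" "B = B1 @ D1"
    by (auto split: option.splits if_splits)
  then show ?case using Tns.IH by auto
qed (auto split: if_splits)

lemma ty_arA: "ty G t = Some (A, B) \<Longrightarrow> set A \<subseteq> g_ar G" using ty_ar by blast
lemma ty_arB: "ty G t = Some (A, B) \<Longrightarrow> set B \<subseteq> g_ar G" using ty_ar by blast

lemma idl: "ty G f = Some (A, B) \<Longrightarrow> Cmp (Idt B) f \<approx> f"
  by (rule hax[OF ax.cat_idl, where X="(A,B)"]) (auto dest: ty_arB)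
lemma idr: "ty G f = Some (A, B) \<Longrightarrow> Cmp f (Idt A) \<approx> f"
  by (rule hax[OF ax.cat_idr, where X="(A,B)"]) (auto dest: ty_arA)
lemma cassoc: "ty G h = Some (A, B) \<Longrightarrow> ty G g = Some (B, C) \<Longrightarrow> ty G f = Some (C, D) \<Longrightarrow>
   Cmp (Cmp f g) h \<approx> Cmp f (Cmp g h)"
  by (rule hax[OF ax.cat_assoc, where X="(A,D)"]) auto
lemma tassoc: "ty G f = Some (A, B) \<Longrightarrow> ty G g = Some (C, D) \<Longrightarrow> ty G h = Some (E, F) \<Longrightarrow>
   Tns (Tns f g) h \<approx> Tns f (Tns g h)"
  by (rule hax[OF ax.mon_assoc, where X="(A@C@E,B@D@F)"]) auto
lemma unitl: "ty G f = Some (A, B) \<Longrightarrow> Tns (Idt []) f \<approx> f"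
  by (rule hax[OF ax.mon_unitl, where X="(A,B)"]) auto
lemma unitr: "ty G f = Some (A, B) \<Longrightarrow> Tns f (Idt []) \<approx> f"
  by (rule hax[OF ax.mon_unitr, where X="(A,B)"]) auto
lemma monid: "set A \<subseteq> g_ar G \<Longrightarrow> set B \<subseteq> g_ar G \<Longrightarrow> Tns (Idt A) (Idt B) \<approx> Idt (A @ B)"
  by (rule hax[OF ax.mon_id, where X="(A@B,A@B)"]) auto
lemma xchg: "ty G g = Some (A, B) \<Longrightarrow> ty G f = Some (B, C) \<Longrightarrow> ty G g' = Some (A', B') \<Longrightarrow> ty G f' = Some (B', C') \<Longrightarrow>
   Tns (Cmp f g) (Cmp f' g') \<approx> Cmp (Tns f f') (Tns g g')"
  by (rule hax[OF ax.mon_interchange, where X="(A@A',C@C')"]) auto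

lemma ty_ex: "ty G t \<noteq> None \<Longrightarrow> \<exists>A B. ty G t = Some (A, B)" by auto

lemma cmpL: "f \<approx> f' \<Longrightarrow> ty G (Cmp f g) \<noteq> None \<Longrightarrow> Cmp f g \<approx> Cmp f' g"
  by (rule hcmp) (auto intro!: hrefl split: option.splits)
lemma cmpR: "g \<approx> g' \<Longrightarrow> ty G (Cmp f g) \<noteq> None \<Longrightarrow> Cmp f g \<approx> Cmp f g'"
  by (rule hcmp) (auto intro!: hrefl split: option.splits if_splits)
lemma tnsL: "f \<approx> f' \<Longrightarrow> ty G g \<noteq> None \<Longrightarrow> Tns f g \<approx> Tns f' g"
  by (rule htns) (auto intro!: hrefl)
lemma tnsR: "g \<approx> g' \<Longrightarrow> ty G f \<noteq> None \<Longrightarrow> Tns f g \<approx> Tns f g'"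
  by (rule htns) (auto intro!: hrefl)

lemma heq_tyeq: "s \<approx> t \<Longrightarrow> ty G t = ty G s" using heq_ty by metis

lemma TS1: "ty G f = Some (A, B) \<Longrightarrow> ty G g = Some (C, D) \<Longrightarrow>
   Tns f g \<approx> Cmp (Tns f (Idt D)) (Tns (Idt A) g)"
proof -
  assume f: "ty G f = Some (A, B)" and g: "ty G g = Some (C, D)"
  have "Tns f g \<approx> Tns (Cmp f (Idt A)) (Cmp (Idt D) g)"
    using f g by (intro htns hsym[OF idr] hsym[OF idl]) auto
  also have "\<dots> \<approx> Cmp (Tns f (Idt D)) (Tns (Idt A) g)"
    using f g by (intro xchg[where B=A and B'=D]) (auto dest: ty_ar)
  finally show ?thesis .
qed

lemma TS2: "ty G f = Some (A, B) \<Longrightarrow> ty G g = Some (C, D) \<Longrightarrow>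
   Tns f g \<approx> Cmp (Tns (Idt B) g) (Tns f (Idt C))"
proof -
  assume f: "ty G f = Some (A, B)" and g: "ty G g = Some (C, D)"
  have "Tns f g \<approx> Tns (Cmp (Idt B) f) (Cmp g (Idt C))"
    using f g by (intro htns hsym[OF idr] hsym[OF idl]) auto
  also have "\<dots> \<approx> Cmp (Tns (Idt B) g) (Tns f (Idt C))"
    using f g by (intro xchg[where B=B and B'=C]) (auto dest: ty_ar)
  finally show ?thesis .
qed

lemma xchg': "ty G g = Some (A, B) \<Longrightarrow> ty G f = Some (B, C) \<Longrightarrow> ty G g' = Some (A', B') \<Longrightarrow> ty G f' = Some (B', C') \<Longrightarrow>
   Cmp (Tns f f') (Tns g g') \<approx> Tns (Cmp f g) (Cmp f' g')"
  by (rule hsym, rule xchg) auto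

lemma TC1: "ty G b = Some (X, Y) \<Longrightarrow> ty G a = Some (Y, Z) \<Longrightarrow> set D \<subseteq> g_ar G \<Longrightarrow>
  Tns (Cmp a b) (Idt D) \<approx> Cmp (Tns a (Idt D)) (Tns b (Idt D))"
proof -
  assume b: "ty G b = Some (X, Y)" and a: "ty G a = Some (Y, Z)" and D: "set D \<subseteq> g_ar G"
  have "Tns (Cmp a b) (Idt D) \<approx> Tns (Cmp a b) (Cmp (Idt D) (Idt D))"
    using a b D by (intro tnsR hsym[OF idl[where A=D]]) auto
  also have "\<dots> \<approx> Cmp (Tns a (Idt D)) (Tns b (Idt D))"
    using a b D by (intro xchg) auto
  finally show ?thesis .
qed

lemma TC2: "ty G b = Some (X, Y) \<Longrightarrow> ty G a = Some (Y, Z) \<Longrightarrow> set D \<subseteq> g_ar G \<Longrightarrow>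
  Tns (Idt D) (Cmp a b) \<approx> Cmp (Tns (Idt D) a) (Tns (Idt D) b)"
proof -
  assume b: "ty G b = Some (X, Y)" and a: "ty G a = Some (Y, Z)" and D: "set D \<subseteq> g_ar G"
  have "Tns (Idt D) (Cmp a b) \<approx> Tns (Cmp (Idt D) (Idt D)) (Cmp a b)"
    using a b D by (intro tnsL hsym[OF idl[where A=D]]) auto
  also have "\<dots> \<approx> Cmp (Tns (Idt D) a) (Tns (Idt D) b)"
    using a b D by (intro xchg) auto
  finally show ?thesis .
qed

end

fun Epsl :: "'m list \<Rightarrow> ('o, 'm) hterm" where
  "Epsl [] = Idt []"
| "Epsl (e # E) = Tns (Eps e) (Epsl E)"

context GP
begin

lemma ty_Epsl[simp]: "set E \<subseteq> g_ar G \<Longrightarrow> ty G (Epsl E) = Some (E, [])"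
  by (induction E) auto

lemma brd_nil_r: "set A \<subseteq> g_ar G \<Longrightarrow> Brd A [] \<approx> Idt A"
proof -
  assume A: "set A \<subseteq> g_ar G"
  have 1: "Brd A [] \<approx> Cmp (Tns (Idt []) (Brd A [])) (Tns (Brd A []) (Idt []))"
    using hax[OF ax.br_hex2[of G A "[]" "[]"], where X="(A,A)"] A by simp
  also have "\<dots> \<approx> Cmp (Brd A []) (Brd A [])"
    using A by (intro hcmp unitl[where A=A and B=A] unitr[where A=A and B=A]) auto
  finally have bb: "Brd A [] \<approx> Cmp (Brd A []) (Brd A [])" .
  have "Idt A \<approx> Cmp (BrdI A []) (Brd A [])"
    by (rule hsym) (insert hax[OF ax.br_inv1[of G A "[]"], where X="(A,A)"] A, simp)
  also have "\<dots> \<approx> Cmp (BrdI A []) (Cmp (Brd A []) (Brd A []))"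
    using A bb by (intro cmpR) auto
  also have "\<dots> \<approx> Cmp (Cmp (BrdI A []) (Brd A [])) (Brd A [])"
    using A by (intro hsym[OF cassoc[where A=A and B=A and C=A and D=A]]) auto
  also have "\<dots> \<approx> Cmp (Idt A) (Brd A [])"
    using hax[OF ax.br_inv1[of G A "[]"], where X="(A,A)"] A by (intro cmpL) auto
  also have "\<dots> \<approx> Brd A []"
    using A by (intro idl[where A=A]) auto
  finally show ?thesis by (rule hsym)
qed

lemma brd_nil_l: "set A \<subseteq> g_ar G \<Longrightarrow> Brd [] A \<approx> Idt A"
proof -
  assume A: "set A \<subseteq> g_ar G"
  have 1: "Brd [] A \<approx> Cmp (Tns (Brd [] A) (Idt [])) (Tns (Idt []) (Brd [] A))"
    using hax[OF ax.br_hex1[of G "[]" "[]" A], where X="(A,A)"] A by simp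
  also have "\<dots> \<approx> Cmp (Brd [] A) (Brd [] A)"
    using A by (intro hcmp unitl[where A=A and B=A] unitr[where A=A and B=A]) auto
  finally have bb: "Brd [] A \<approx> Cmp (Brd [] A) (Brd [] A)" .
  have "Idt A \<approx> Cmp (BrdI [] A) (Brd [] A)"
    by (rule hsym) (insert hax[OF ax.br_inv1[of G "[]" A], where X="(A,A)"] A, simp)
  also have "\<dots> \<approx> Cmp (BrdI [] A) (Cmp (Brd [] A) (Brd [] A))"
    using A bb by (intro cmpR) auto
  also have "\<dots> \<approx> Cmp (Cmp (BrdI [] A) (Brd [] A)) (Brd [] A)"
    using A by (intro hsym[OF cassoc[where A=A and B=A and C=A and D=A]]) auto
  also have "\<dots> \<approx> Cmp (Idt A) (Brd [] A)"
    using hax[OF ax.br_inv1[of G "[]" A], where X="(A,A)"] A by (intro cmpL) auto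
  also have "\<dots> \<approx> Brd [] A"
    using A by (intro idl[where A=A]) auto
  finally show ?thesis by (rule hsym)
qed

lemma kill_brd1: "ty G h = Some (E, []) \<Longrightarrow> set B \<subseteq> g_ar G \<Longrightarrow>
   Cmp (Tns h (Idt B)) (Brd B E) \<approx> Tns (Idt B) h"
proof -
  assume h: "ty G h = Some (E, [])" and B: "set B \<subseteq> g_ar G"
  have E: "set E \<subseteq> g_ar G" using h by (auto dest: ty_ar)
  have "Cmp (Tns h (Idt B)) (Brd B E) \<approx> Cmp (Brd B []) (Tns (Idt B) h)"
    by (rule hsym, rule hax[OF ax.br_nat[of G "Idt B" B B h E "[]"], where X="(B@E,B)"])
     (insert B E h, auto simp: wt_ty)
  also have "\<dots> \<approx> Cmp (Idt B) (Tns (Idt B) h)"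
    using B E h by (intro cmpL brd_nil_r) auto
  also have "\<dots> \<approx> Tns (Idt B) h"
    using B E h by (intro idl[where A="B@E"]) auto
  finally show ?thesis .
qed

lemma kill_brd2: "ty G h = Some (E, []) \<Longrightarrow> set B \<subseteq> g_ar G \<Longrightarrow>
   Cmp (Tns (Idt B) h) (Brd E B) \<approx> Tns h (Idt B)"
proof -
  assume h: "ty G h = Some (E, [])" and B: "set B \<subseteq> g_ar G"
  have E: "set E \<subseteq> g_ar G" using h by (auto dest: ty_ar)
  have "Cmp (Tns (Idt B) h) (Brd E B) \<approx> Cmp (Brd [] B) (Tns h (Idt B))"
    by (rule hsym, rule hax[OF ax.br_nat[of G h E "[]" "Idt B" B B], where X="(E@B,B)"])
     (insert B E h, auto simp: wt_ty)
  also have "\<dots> \<approx> Cmp (Idt B) (Tns h (Idt B))"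
    using B E h by (intro cmpL brd_nil_l) auto
  also have "\<dots> \<approx> Tns h (Idt B)"
    using B E h by (intro idl[where A="E@B"]) auto
  finally show ?thesis .
qed

lemma eps_past: "ty G h = Some (E, []) \<Longrightarrow> set B \<subseteq> g_ar G \<Longrightarrow>
   Tns (Idt B) h \<approx> Cmp (Tns h (Idt B)) (BrdI E B)"
proof -
  assume h: "ty G h = Some (E, [])" and B: "set B \<subseteq> g_ar G"
  have E: "set E \<subseteq> g_ar G" using h by (auto dest: ty_ar)
  have "Cmp (Tns h (Idt B)) (BrdI E B) \<approx> Cmp (Cmp (Tns (Idt B) h) (Brd E B)) (BrdI E B)"
    using B E h by (intro cmpL hsym[OF kill_brd2]) auto
  also have "\<dots> \<approx> Cmp (Tns (Idt B) h) (Cmp (Brd E B) (BrdI E B))"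
    using B E h by (intro cassoc[where A="B@E" and B="E@B" and C="B@E" and D=B]) auto
  also have "\<dots> \<approx> Cmp (Tns (Idt B) h) (Idt (B@E))"
    using B E h by (intro cmpR hax[OF ax.br_inv2, where X="(B@E,B@E)"]) auto
  also have "\<dots> \<approx> Tns (Idt B) h"
    using B E h by (intro idr[where B=B]) auto
  finally show ?thesis by (rule hsym)
qed

lemma Epsl_app: "set E1 \<subseteq> g_ar G \<Longrightarrow> set E2 \<subseteq> g_ar G \<Longrightarrow> Epsl (E1 @ E2) \<approx> Tns (Epsl E1) (Epsl E2)"
proof (induction E1)
  case Nil
  then show ?case by (auto intro!: hsym[OF unitl[where A=E2 and B="[]"]])
next
  case (Cons e E1)
  then have "Epsl ((e # E1) @ E2) \<approx> Tns (Eps e) (Tns (Epsl E1) (Epsl E2))"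
    by (auto intro!: tnsR)
  also have "\<dots> \<approx> Tns (Tns (Eps e) (Epsl E1)) (Epsl E2)"
    using Cons.prems by (intro hsym[OF tassoc[where A="[e]" and B="[]" and C=E1 and D="[]" and E=E2 and F="[]"]]) auto
  finally show ?case by simp
qed


definition cutp :: "('o, 'm) hterm \<Rightarrow> 'm set \<Rightarrow> bool" where
  "cutp t S \<longleftrightarrow> (\<exists>A B E t1. ty G t = Some (A, B) \<and> ty G t1 = Some (A, E @ B) \<and>
      t \<approx> Cmp (Tns (Epsl E) (Idt B)) t1 \<and> S \<subseteq> set E)"

lemma cut_triv: "ty G t = Some (A, B) \<Longrightarrow> cutp t {}"
proof -
  assume t: "ty G t = Some (A, B)"
  have B: "set B \<subseteq> g_ar G" using t by (auto dest: ty_ar)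
  have "Cmp (Tns (Epsl []) (Idt B)) t \<approx> Cmp (Idt B) t"
    by (rule cmpL, simp, rule unitl[where A=B and B=B]) (insert t B, simp_all)
  also have "\<dots> \<approx> t" using t by (rule idl)
  finally have fin: "Cmp (Tns (Epsl []) (Idt B)) t \<approx> t" .
  show ?thesis unfolding cutp_def
  proof (intro exI conjI)
    show "ty G t = Some (A, B)" by (rule t)
    show "ty G t = Some (A, [] @ B)" using t by simp
    show "t \<approx> Cmp (Tns (Epsl []) (Idt B)) t" by (rule hsym[OF fin])
  qed simp
qed

lemma cut_heq: "cutp t S \<Longrightarrow> t \<approx> t' \<Longrightarrow> cutp t' S"
proof -
  assume c: "cutp t S" and e: "t \<approx> t'"
  from c obtain A B E t1 where 1: "ty G t = Some (A, B)" "ty G t1 = Some (A, E @ B)"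
      "t \<approx> Cmp (Tns (Epsl E) (Idt B)) t1" "S \<subseteq> set E" unfolding cutp_def by blast
  have "ty G t' = Some (A, B)" using heq_tyeq[OF e] 1(1) by simp
  moreover have "t' \<approx> Cmp (Tns (Epsl E) (Idt B)) t1" using heq_trans[OF hsym[OF e] 1(3)] .
  ultimately show ?thesis unfolding cutp_def using 1 by blast
qed

lemma cut_mono: "cutp t S \<Longrightarrow> S' \<subseteq> S \<Longrightarrow> cutp t S'"
  unfolding cutp_def by blast

lemma cut_idt1: "a \<in> g_ar G \<Longrightarrow> cutp (Idt [a]) {a}"
proof -
  assume a: "a \<in> g_ar G"
  have "Cmp (Tns (Epsl [a]) (Idt [a])) (Dlt a) \<approx> Cmp (Tns (Eps a) (Idt [a])) (Dlt a)"
    by (rule cmpL, simp, rule tnsL, rule unitr[where A="[a]" and B="[]"]) (insert a, simp_all)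
  also have "\<dots> \<approx> Idt [a]"
    by (rule hax[OF ax.h_counitl[unfolded i1_def], where X="([a],[a])"]) (insert a, simp_all)
  finally have fin: "Cmp (Tns (Epsl [a]) (Idt [a])) (Dlt a) \<approx> Idt [a]" .
  show ?thesis unfolding cutp_def
  proof (intro exI conjI)
    show "ty G (Idt [a]) = Some ([a], [a])" using a by simp
    show "ty G (Dlt a) = Some ([a], [a] @ [a])" using a by simp
    show "Idt [a] \<approx> Cmp (Tns (Epsl [a]) (Idt [a])) (Dlt a)" by (rule hsym[OF fin])
  qed simp
qed

lemma cut_cmp:
  assumes cf: "cutp f S1" and cg: "cutp g S2" and tyfg: "ty G (Cmp f g) \<noteq> None"
  shows "cutp (Cmp f g) (S1 \<union> S2)"
proof -
  from cf obtain B C Ef f1 where f: "ty G f = Some (B, C)" and f1: "ty G f1 = Some (B, Ef @ C)"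
    and ef: "f \<approx> Cmp (Tns (Epsl Ef) (Idt C)) f1" and s1: "S1 \<subseteq> set Ef"
    unfolding cutp_def by blast
  from cg obtain A B' Eg g1 where g: "ty G g = Some (A, B')" and g1: "ty G g1 = Some (A, Eg @ B')"
    and eg: "g \<approx> Cmp (Tns (Epsl Eg) (Idt B')) g1" and s2: "S2 \<subseteq> set Eg"
    unfolding cutp_def by blast
  have BB: "B' = B" using tyfg f g by (auto split: if_splits)
  note g1 = g1[unfolded BB] and eg = eg[unfolded BB] and g = g[unfolded BB]
  have sets: "set Ef \<subseteq> g_ar G" "set C \<subseteq> g_ar G" "set B \<subseteq> g_ar G" "set Eg \<subseteq> g_ar G" "set A \<subseteq> g_ar G"
    using ty_ar[OF f1] ty_ar[OF g1] by auto
  note tys = f g f1 g1 sets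
  let ?Kf = "Tns (Epsl Ef) (Idt C)" and ?Kg = "Tns (Epsl Eg) (Idt B)"
  let ?K' = "Tns (Epsl Eg) (Idt (Ef @ C))"
  have star: "Cmp f1 ?Kg \<approx> Cmp ?K' (Tns (Idt Eg) f1)"
  proof -
    have "Cmp f1 ?Kg \<approx> Cmp (Tns (Idt []) f1) ?Kg"
      by (rule cmpL, rule hsym, rule unitl[where A=B and B="Ef@C"]) (simp_all add: tys)
    also have "\<dots> \<approx> Tns (Epsl Eg) f1"
      by (rule hsym, rule TS2[where A=Eg and B="[]" and C=B and D="Ef@C"]) (simp_all add: tys)
    also have "\<dots> \<approx> Cmp ?K' (Tns (Idt Eg) f1)"
      by (rule TS1[where A=Eg and B="[]" and C=B and D="Ef@C"]) (simp_all add: tys)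
    finally show ?thesis .
  qed
  have X: "Cmp (Epsl Ef) (Tns (Epsl Eg) (Idt Ef)) \<approx> Tns (Epsl Eg) (Epsl Ef)"
  proof -
    have "Tns (Epsl Eg) (Epsl Ef) \<approx> Cmp (Tns (Idt []) (Epsl Ef)) (Tns (Epsl Eg) (Idt Ef))"
      by (rule TS2[where A=Eg and B="[]" and C=Ef and D="[]"]) (simp_all add: tys)
    also have "\<dots> \<approx> Cmp (Epsl Ef) (Tns (Epsl Eg) (Idt Ef))"
      by (rule cmpL, rule unitl[where A=Ef and B="[]"]) (simp_all add: tys)
    finally show ?thesis by (rule hsym)
  qed
  have star2: "Cmp ?Kf ?K' \<approx> Tns (Epsl (Eg @ Ef)) (Idt C)"
  proof -
    have "Cmp ?Kf ?K' \<approx> Cmp ?Kf (Tns (Epsl Eg) (Tns (Idt Ef) (Idt C)))"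
      by (rule cmpR, rule tnsR, rule hsym, rule monid) (simp_all add: tys)
    also have "\<dots> \<approx> Cmp ?Kf (Tns (Tns (Epsl Eg) (Idt Ef)) (Idt C))"
      by (rule cmpR, rule hsym, rule tassoc[where A=Eg and B="[]" and C=Ef and D=Ef and E=C and F=C]) (simp_all add: tys)
    also have "\<dots> \<approx> Tns (Cmp (Epsl Ef) (Tns (Epsl Eg) (Idt Ef))) (Cmp (Idt C) (Idt C))"
      by (rule xchg'[where A="Eg@Ef" and B=Ef and C="[]" and A'=C and B'=C and C'=C]) (simp_all add: tys)
    also have "\<dots> \<approx> Tns (Tns (Epsl Eg) (Epsl Ef)) (Idt C)"
      by (rule htns[OF X], rule idl[where A=C]) (simp_all add: tys)
    also have "\<dots> \<approx> Tns (Epsl (Eg @ Ef)) (Idt C)"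
      by (rule tnsL, rule hsym, rule Epsl_app) (simp_all add: tys)
    finally show ?thesis .
  qed
  have "Cmp f g \<approx> Cmp (Cmp ?Kf f1) (Cmp ?Kg g1)"
    by (rule hcmp[OF ef eg]) (simp add: tys)
  also have "\<dots> \<approx> Cmp ?Kf (Cmp f1 (Cmp ?Kg g1))"
    by (rule cassoc[where A=A and B=B and C="Ef@C" and D=C]) (simp_all add: tys)
  also have "\<dots> \<approx> Cmp ?Kf (Cmp (Cmp f1 ?Kg) g1)"
    by (rule cmpR, rule hsym, rule cassoc[where A=A and B="Eg@B" and C=B and D="Ef@C"]) (simp_all add: tys)
  also have "\<dots> \<approx> Cmp ?Kf (Cmp (Cmp ?K' (Tns (Idt Eg) f1)) g1)"
    by (rule cmpR, rule cmpL, rule star) (simp_all add: tys)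
  also have "\<dots> \<approx> Cmp ?Kf (Cmp ?K' (Cmp (Tns (Idt Eg) f1) g1))"
    by (rule cmpR, rule cassoc[where A=A and B="Eg@B" and C="Eg@Ef@C" and D="Ef@C"]) (simp_all add: tys)
  also have "\<dots> \<approx> Cmp (Cmp ?Kf ?K') (Cmp (Tns (Idt Eg) f1) g1)"
    by (rule hsym, rule cassoc[where A=A and B="Eg@Ef@C" and C="Ef@C" and D=C]) (simp_all add: tys)
  also have "\<dots> \<approx> Cmp (Tns (Epsl (Eg @ Ef)) (Idt C)) (Cmp (Tns (Idt Eg) f1) g1)"
    by (rule cmpL, rule star2) (simp_all add: tys)
  finally have fin: "Cmp f g \<approx> Cmp (Tns (Epsl (Eg @ Ef)) (Idt C)) (Cmp (Tns (Idt Eg) f1) g1)" .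
  show ?thesis unfolding cutp_def
  proof (intro exI conjI)
    show "ty G (Cmp f g) = Some (A, C)" by (simp add: tys)
    show "ty G (Cmp (Tns (Idt Eg) f1) g1) = Some (A, (Eg @ Ef) @ C)" by (simp add: tys)
    show "Cmp f g \<approx> Cmp (Tns (Epsl (Eg @ Ef)) (Idt C)) (Cmp (Tns (Idt Eg) f1) g1)" by (rule fin)
    show "S1 \<union> S2 \<subseteq> set (Eg @ Ef)" using s1 s2 by auto
  qed
qed


lemma cut_tns:
  assumes cf: "cutp f S1" and cg: "cutp g S2"
  shows "cutp (Tns f g) (S1 \<union> S2)"
proof -
  from cf obtain A B Ef f1 where f: "ty G f = Some (A, B)" and f1: "ty G f1 = Some (A, Ef @ B)"
    and ef: "f \<approx> Cmp (Tns (Epsl Ef) (Idt B)) f1" and s1: "S1 \<subseteq> set Ef"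
    unfolding cutp_def by blast
  from cg obtain C D Eg g1 where g: "ty G g = Some (C, D)" and g1: "ty G g1 = Some (C, Eg @ D)"
    and eg: "g \<approx> Cmp (Tns (Epsl Eg) (Idt D)) g1" and s2: "S2 \<subseteq> set Eg"
    unfolding cutp_def by blast
  have sets: "set Ef \<subseteq> g_ar G" "set B \<subseteq> g_ar G" "set A \<subseteq> g_ar G" "set Eg \<subseteq> g_ar G"
     "set D \<subseteq> g_ar G" "set C \<subseteq> g_ar G"
    using ty_ar[OF f1] ty_ar[OF g1] by auto
  note tys = f g f1 g1 sets
  let ?Kf = "Tns (Epsl Ef) (Idt B)" and ?Kg = "Tns (Epsl Eg) (Idt D)"
  let ?K = "Tns (Epsl (Ef @ Eg)) (Idt (B @ D))"
  let ?P = "Tns (Idt Ef) (Tns (BrdI Eg B) (Idt D))"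
  have Q: "Tns (Epsl Ef) (Tns (Tns (Epsl Eg) (Idt B)) (Idt D)) \<approx> ?K"
  proof -
    have "Tns (Epsl Ef) (Tns (Tns (Epsl Eg) (Idt B)) (Idt D)) \<approx> Tns (Epsl Ef) (Tns (Epsl Eg) (Tns (Idt B) (Idt D)))"
      by (rule tnsR, rule tassoc[where A=Eg and B="[]" and C=B and D=B and E=D and F=D]) (simp_all add: tys)
    also have "\<dots> \<approx> Tns (Tns (Epsl Ef) (Epsl Eg)) (Tns (Idt B) (Idt D))"
      by (rule hsym, rule tassoc[where A=Ef and B="[]" and C=Eg and D="[]" and E="B@D" and F="B@D"]) (simp_all add: tys)
    also have "\<dots> \<approx> ?K"
      by (rule htns, rule hsym, rule Epsl_app, simp_all add: tys, rule monid, simp_all add: tys)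
    finally show ?thesis .
  qed
  have KK: "Tns ?Kf ?Kg \<approx> Cmp ?K ?P"
  proof -
    have "Tns ?Kf ?Kg \<approx> Tns (Epsl Ef) (Tns (Idt B) ?Kg)"
      by (rule tassoc[where A=Ef and B="[]" and C=B and D=B and E="Eg@D" and F=D]) (simp_all add: tys)
    also have "\<dots> \<approx> Tns (Epsl Ef) (Tns (Tns (Idt B) (Epsl Eg)) (Idt D))"
      by (rule tnsR, rule hsym, rule tassoc[where A=B and B=B and C=Eg and D="[]" and E=D and F=D]) (simp_all add: tys)
    also have "\<dots> \<approx> Tns (Epsl Ef) (Tns (Cmp (Tns (Epsl Eg) (Idt B)) (BrdI Eg B)) (Idt D))"
      by (rule tnsR, rule tnsL, rule eps_past[where E=Eg]) (simp_all add: tys)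
    also have "\<dots> \<approx> Tns (Epsl Ef) (Cmp (Tns (Tns (Epsl Eg) (Idt B)) (Idt D)) (Tns (BrdI Eg B) (Idt D)))"
      by (rule tnsR, rule TC1[where X="B@Eg" and Y="Eg@B" and Z=B]) (simp_all add: tys)
    also have "\<dots> \<approx> Tns (Cmp (Epsl Ef) (Idt Ef)) (Cmp (Tns (Tns (Epsl Eg) (Idt B)) (Idt D)) (Tns (BrdI Eg B) (Idt D)))"
      by (rule tnsL, rule hsym, rule idr[where A=Ef and B="[]"]) (simp_all add: tys)
    also have "\<dots> \<approx> Cmp (Tns (Epsl Ef) (Tns (Tns (Epsl Eg) (Idt B)) (Idt D))) ?P"
      by (rule xchg[where A=Ef and B=Ef and C="[]" and A'="B@Eg@D" and B'="Eg@B@D" and C'="B@D"]) (simp_all add: tys)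
    also have "\<dots> \<approx> Cmp ?K ?P"
      by (rule cmpL, rule Q) (simp_all add: tys)
    finally show ?thesis .
  qed
  have "Tns f g \<approx> Tns (Cmp ?Kf f1) (Cmp ?Kg g1)" by (rule htns[OF ef eg])
  also have "\<dots> \<approx> Cmp (Tns ?Kf ?Kg) (Tns f1 g1)"
    by (rule xchg[where A=A and B="Ef@B" and C=B and A'=C and B'="Eg@D" and C'=D]) (simp_all add: tys)
  also have "\<dots> \<approx> Cmp (Cmp ?K ?P) (Tns f1 g1)"
    by (rule cmpL, rule KK) (simp_all add: tys)
  also have "\<dots> \<approx> Cmp ?K (Cmp ?P (Tns f1 g1))"
    by (rule cassoc[where A="A@C" and B="Ef@B@Eg@D" and C="Ef@Eg@B@D" and D="B@D"]) (simp_all add: tys)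
  finally have fin: "Tns f g \<approx> Cmp ?K (Cmp ?P (Tns f1 g1))" .
  show ?thesis unfolding cutp_def
  proof (intro exI conjI)
    show "ty G (Tns f g) = Some (A @ C, B @ D)" by (simp add: tys)
    show "ty G (Cmp ?P (Tns f1 g1)) = Some (A @ C, (Ef @ Eg) @ (B @ D))" by (simp add: tys)
    show "Tns f g \<approx> Cmp ?K (Cmp ?P (Tns f1 g1))" by (rule fin)
    show "S1 \<union> S2 \<subseteq> set (Ef @ Eg)" using s1 s2 by auto
  qed
qed

lemma cut_idt: "set A \<subseteq> g_ar G \<Longrightarrow> cutp (Idt A) (set A)"
proof (induction A)
  case Nil
  then show ?case using cut_triv[of "Idt []" "[]" "[]"] by simp
next
  case (Cons a A)
  then have "cutp (Tns (Idt [a]) (Idt A)) ({a} \<union> set A)"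
    by (intro cut_tns cut_idt1) auto
  moreover have "Tns (Idt [a]) (Idt A) \<approx> Idt ([a] @ A)"
    using Cons.prems by (intro monid) auto
  ultimately show ?case using cut_heq by fastforce
qed

lemma cut_gen: "ty G t = Some (A, B) \<Longrightarrow> labels G t \<subseteq> set A \<union> set B \<Longrightarrow> cutp t (labels G t)"
proof -
  assume t: "ty G t = Some (A, B)" and l: "labels G t \<subseteq> set A \<union> set B"
  have sets: "set A \<subseteq> g_ar G" "set B \<subseteq> g_ar G" using ty_ar[OF t] by auto
  have "cutp (Cmp (Idt B) (Cmp t (Idt A))) (set B \<union> ({} \<union> set A))"
    using t sets by (intro cut_cmp cut_idt cut_triv) auto
  moreover have "Cmp (Idt B) (Cmp t (Idt A)) \<approx> t"
  proof -
    have "Cmp (Idt B) (Cmp t (Idt A)) \<approx> Cmp t (Idt A)" by (rule idl[where A=A]) (simp add: t sets)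
    also have "\<dots> \<approx> t" by (rule idr[OF t])
    finally show ?thesis .
  qed
  ultimately have "cutp t (set B \<union> ({} \<union> set A))" by (rule cut_heq)
  then show ?thesis by (rule cut_mono) (use l in auto)
qed

lemma cut_gen': "ty G t \<noteq> None \<Longrightarrow> (\<And>A B. ty G t = Some (A, B) \<Longrightarrow> labels G t \<subseteq> set A \<union> set B) \<Longrightarrow> cutp t (labels G t)"
  using cut_gen by auto

lemma cut_all: "ty G t \<noteq> None \<Longrightarrow> cutp t (labels G t)"
proof (induction t)
  case (Idt A)
  then show ?case using cut_idt by (auto split: if_splits)
next
  case (Brd A B)
  then have s: "set A \<subseteq> g_ar G" "set B \<subseteq> g_ar G" by (auto split: if_splits)
  have "cutp (Cmp (Brd A B) (Idt (A @ B))) ({} \<union> set (A @ B))"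
    using s by (intro cut_cmp cut_idt cut_triv[where A="A@B" and B="B@A"]) auto
  moreover have "Cmp (Brd A B) (Idt (A @ B)) \<approx> Brd A B" by (rule idr[where B="B@A"]) (simp add: s)
  ultimately have "cutp (Brd A B) ({} \<union> set (A @ B))" by (rule cut_heq)
  then show ?case by (rule cut_mono) auto
next
  case (BrdI A B)
  then have s: "set A \<subseteq> g_ar G" "set B \<subseteq> g_ar G" by (auto split: if_splits)
  have "cutp (Cmp (BrdI A B) (Idt (B @ A))) ({} \<union> set (B @ A))"
    using s by (intro cut_cmp cut_idt cut_triv[where A="B@A" and B="A@B"]) auto
  moreover have "Cmp (BrdI A B) (Idt (B @ A)) \<approx> BrdI A B" by (rule idr[where B="A@B"]) (simp add: s)
  ultimately have "cutp (BrdI A B) ({} \<union> set (B @ A))" by (rule cut_heq)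
  then show ?case by (rule cut_mono) auto
next
  case (Cmp f g)
  then have "ty G f \<noteq> None" "ty G g \<noteq> None" by (auto split: option.splits if_splits)
  then show ?case using Cmp cut_cmp by fastforce
next
  case (Tns f g)
  then have "ty G f \<noteq> None" "ty G g \<noteq> None" by (auto split: option.splits if_splits)
  then show ?case using Tns cut_tns by fastforce
qed (rule cut_gen'; auto split: if_splits)+

end

context GP
begin

lemma epsS: "g \<in> g_ar G \<Longrightarrow> Cmp (Eps (g_inv G g)) (Ant g) \<approx> Eps g"
proof -
  assume g: "g \<in> g_ar G"
  let ?j = "g_tgt G g" and ?gi = "g_inv G g"
  let ?s = "Cmp (Eps ?gi) (Ant g)"
  have em: "ax G (Cmp (Eps (g_ide G ?j)) (Mul ?gi g)) (Tns (Eps ?gi) (Eps g))"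
    using ax.h_epsmul[of G ?gi g] g by simp
  have "Eps g \<approx> Cmp (Idt []) (Eps g)"
    by (rule hsym, rule idl[where A="[g]"]) (simp add: g)
  also have "\<dots> \<approx> Cmp (Cmp (Eps (g_ide G ?j)) (Eta ?j)) (Eps g)"
    by (rule cmpL, rule hsym, rule hax[OF ax.h_epseta[of G ?j], where X="([],[])"]) (simp_all add: g)
  also have "\<dots> \<approx> Cmp (Eps (g_ide G ?j)) (Cmp (Eta ?j) (Eps g))"
    by (rule cassoc[where A="[g]" and B="[]" and C="[g_ide G ?j]" and D="[]"]) (simp_all add: g)
  also have "\<dots> \<approx> Cmp (Eps (g_ide G ?j)) (Cmp (Mul ?gi g) (Cmp (Tns (Ant g) (Idt [g])) (Dlt g)))"
    by (rule cmpR, rule hsym, rule hax[OF ax.h_antl[of G g, unfolded i1_def], where X="([g],[g_ide G ?j])"])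
      (simp_all add: g)
  also have "\<dots> \<approx> Cmp (Cmp (Eps (g_ide G ?j)) (Mul ?gi g)) (Cmp (Tns (Ant g) (Idt [g])) (Dlt g))"
    by (rule hsym, rule cassoc[where A="[g]" and B="[?gi, g]" and C="[g_ide G ?j]" and D="[]"]) (simp_all add: g)
  also have "\<dots> \<approx> Cmp (Tns (Eps ?gi) (Eps g)) (Cmp (Tns (Ant g) (Idt [g])) (Dlt g))"
    by (rule cmpL, rule hax[OF em, where X="([?gi,g],[])"]) (simp_all add: g)
  also have "\<dots> \<approx> Cmp (Cmp (Tns (Eps ?gi) (Eps g)) (Tns (Ant g) (Idt [g]))) (Dlt g)"
    by (rule hsym, rule cassoc[where A="[g]" and B="[g,g]" and C="[?gi,g]" and D="[]"]) (simp_all add: g)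
  also have "\<dots> \<approx> Cmp (Tns ?s (Cmp (Eps g) (Idt [g]))) (Dlt g)"
    by (rule cmpL, rule xchg'[where A="[g]" and B="[?gi]" and C="[]" and A'="[g]" and B'="[g]" and C'="[]"])
      (simp_all add: g)
  also have "\<dots> \<approx> Cmp (Tns ?s (Eps g)) (Dlt g)"
    by (rule cmpL, rule tnsR, rule idr[where A="[g]" and B="[]"]) (simp_all add: g)
  also have "\<dots> \<approx> Cmp (Cmp (Tns ?s (Idt [])) (Tns (Idt [g]) (Eps g))) (Dlt g)"
    by (rule cmpL, rule TS1[where A="[g]" and B="[]" and C="[g]" and D="[]"]) (simp_all add: g)
  also have "\<dots> \<approx> Cmp (Cmp ?s (Tns (Idt [g]) (Eps g))) (Dlt g)"
    by (rule cmpL, rule cmpL, rule unitr[where A="[g]" and B="[]"]) (simp_all add: g)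
  also have "\<dots> \<approx> Cmp ?s (Cmp (Tns (Idt [g]) (Eps g)) (Dlt g))"
    by (rule cassoc[where A="[g]" and B="[g,g]" and C="[g]" and D="[]"]) (simp_all add: g)
  also have "\<dots> \<approx> Cmp ?s (Idt [g])"
    by (rule cmpR, rule hax[OF ax.h_counitr[unfolded i1_def], where X="([g],[g])"]) (simp_all add: g)
  also have "\<dots> \<approx> ?s"
    by (rule idr[where B="[]"]) (simp add: g)
  finally show ?thesis by (rule hsym)
qed

definition good :: "'m list \<Rightarrow> 'm \<Rightarrow> bool" where
  "good E k \<longleftrightarrow> k \<in> g_ar G \<and> (\<exists>\<theta>. ty G \<theta> = Some (k # E, []) \<and> Cmp \<theta> (Tns (Lco k) (Idt E)) \<approx> Epsl E)"

lemma good_ide: "set E \<subseteq> g_ar G \<Longrightarrow> i \<in> g_ob G \<Longrightarrow> good E (g_ide G i)"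
proof -
  assume E: "set E \<subseteq> g_ar G" and i: "i \<in> g_ob G"
  let ?th = "Tns (Lint i) (Epsl E)"
  have "Cmp ?th (Tns (Lco (g_ide G i)) (Idt E)) \<approx> Tns (Cmp (Lint i) (Lco (g_ide G i))) (Cmp (Epsl E) (Idt E))"
    by (rule xchg'[where A="[]" and B="[g_ide G i]" and C="[]" and A'=E and B'=E and C'="[]"]) (simp_all add: E i)
  also have "\<dots> \<approx> Tns (Idt []) (Epsl E)"
    by (rule htns, rule hax[OF ax.i_norm1, where X="([],[])"], simp_all add: E i, rule idr[where B="[]"], simp add: E)
  also have "\<dots> \<approx> Epsl E"
    by (rule unitl[where A=E and B="[]"]) (simp add: E)
  finally have 1: "Cmp ?th (Tns (Lco (g_ide G i)) (Idt E)) \<approx> Epsl E" .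
  have 2: "ty G ?th = Some (g_ide G i # E, [])" by (simp add: E i)
  have 3: "g_ide G i \<in> g_ar G" using i by simp
  show ?thesis unfolding good_def using 1 2 3 by blast
qed

lemma dup: "e \<in> set E \<Longrightarrow> set E \<subseteq> g_ar G \<Longrightarrow>
   \<exists>D. ty G D = Some (E, e # E) \<and> Cmp (Tns (Eps e) (Idt E)) D \<approx> Idt E"
proof -
  assume eE: "e \<in> set E" and E: "set E \<subseteq> g_ar G"
  obtain E1 E2 where EE: "E = E1 @ e # E2" using split_list[OF eE] by blast
  have s: "set E1 \<subseteq> g_ar G" "set E2 \<subseteq> g_ar G" "e \<in> g_ar G" using E EE by auto
  let ?D = "Cmp (Tns (Brd E1 [e]) (Idt (e # E2))) (Tns (Idt E1) (Tns (Dlt e) (Idt E2)))"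
  have tyD: "ty G ?D = Some (E1 @ e # E2, e # E1 @ e # E2)" by (simp add: s)
  have monid1: "Tns (Idt [e]) (Idt E2) \<approx> Idt (e # E2)" using monid[of "[e]" E2] s by simp
  have inner2: "Cmp (Tns (Eps e) (Idt (e # E2))) (Tns (Dlt e) (Idt E2)) \<approx> Idt (e # E2)"
  proof -
    have "Cmp (Tns (Eps e) (Idt (e # E2))) (Tns (Dlt e) (Idt E2)) \<approx>
          Cmp (Tns (Eps e) (Tns (Idt [e]) (Idt E2))) (Tns (Dlt e) (Idt E2))"
      by (rule cmpL, rule tnsR, rule hsym[OF monid1]) (simp_all add: s)
    also have "\<dots> \<approx> Cmp (Tns (Tns (Eps e) (Idt [e])) (Idt E2)) (Tns (Dlt e) (Idt E2))"
      by (rule cmpL, rule hsym, rule tassoc[where A="[e]" and B="[]" and C="[e]" and D="[e]" and E=E2 and F=E2])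
        (simp_all add: s)
    also have "\<dots> \<approx> Tns (Cmp (Tns (Eps e) (Idt [e])) (Dlt e)) (Cmp (Idt E2) (Idt E2))"
      by (rule xchg'[where A="[e]" and B="[e,e]" and C="[e]" and A'=E2 and B'=E2 and C'=E2]) (simp_all add: s)
    also have "\<dots> \<approx> Tns (Idt [e]) (Idt E2)"
      by (rule htns, rule hax[OF ax.h_counitl[unfolded i1_def], where X="([e],[e])"], simp_all add: s,
          rule idl[where A=E2], simp add: s)
    also have "\<dots> \<approx> Idt (e # E2)" by (rule monid1)
    finally show ?thesis .
  qed
  have "Cmp (Tns (Eps e) (Idt (E1 @ e # E2))) ?D \<approx> Cmp (Tns (Eps e) (Tns (Idt E1) (Idt (e # E2)))) ?D"
    by (rule cmpL, rule tnsR, rule hsym, rule monid) (simp_all add: s)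
  also have "\<dots> \<approx> Cmp (Tns (Tns (Eps e) (Idt E1)) (Idt (e # E2))) ?D"
    by (rule cmpL, rule hsym, rule tassoc[where A="[e]" and B="[]" and C=E1 and D=E1 and E="e#E2" and F="e#E2"])
      (simp_all add: s)
  also have "\<dots> \<approx> Cmp (Cmp (Tns (Tns (Eps e) (Idt E1)) (Idt (e # E2))) (Tns (Brd E1 [e]) (Idt (e # E2))))
                    (Tns (Idt E1) (Tns (Dlt e) (Idt E2)))"
    by (rule hsym, rule cassoc[where A="E1 @ e # E2" and B="E1 @ e # e # E2" and C="e # E1 @ e # E2" and D="E1 @ e # E2"])
      (simp_all add: s)
  also have "\<dots> \<approx> Cmp (Tns (Cmp (Tns (Eps e) (Idt E1)) (Brd E1 [e])) (Cmp (Idt (e # E2)) (Idt (e # E2))))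
                    (Tns (Idt E1) (Tns (Dlt e) (Idt E2)))"
    by (rule cmpL, rule xchg'[where A="E1@[e]" and B="[e]@E1" and C=E1 and A'="e#E2" and B'="e#E2" and C'="e#E2"])
      (simp_all add: s)
  also have "\<dots> \<approx> Cmp (Tns (Tns (Idt E1) (Eps e)) (Idt (e # E2))) (Tns (Idt E1) (Tns (Dlt e) (Idt E2)))"
    by (rule cmpL, rule htns, rule kill_brd1[where E="[e]"], simp_all add: s, rule idl[where A="e#E2"], simp add: s)
  also have "\<dots> \<approx> Cmp (Tns (Idt E1) (Tns (Eps e) (Idt (e # E2)))) (Tns (Idt E1) (Tns (Dlt e) (Idt E2)))"
    by (rule cmpL, rule tassoc[where A=E1 and B=E1 and C="[e]" and D="[]" and E="e#E2" and F="e#E2"]) (simp_all add: s)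
  also have "\<dots> \<approx> Tns (Cmp (Idt E1) (Idt E1)) (Cmp (Tns (Eps e) (Idt (e # E2))) (Tns (Dlt e) (Idt E2)))"
    by (rule xchg'[where A=E1 and B=E1 and C=E1 and A'="e#E2" and B'="e#e#E2" and C'="e#E2"]) (simp_all add: s)
  also have "\<dots> \<approx> Tns (Idt E1) (Idt (e # E2))"
    by (rule htns, rule idl[where A=E1], simp add: s, rule inner2)
  also have "\<dots> \<approx> Idt (E1 @ e # E2)"
    by (rule monid) (simp_all add: s)
  finally have "Cmp (Tns (Eps e) (Idt (E1 @ e # E2))) ?D \<approx> Idt (E1 @ e # E2)" .
  then show ?thesis using tyD EE by blast
qed


lemma good_step:
  assumes E: "set E \<subseteq> g_ar G" and gk: "good E k" and eE: "e \<in> set E"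
    and sg: "ty G \<sigma> = Some ([e], [h])" and sh: "Cmp (Eps h) \<sigma> \<approx> Eps e"
    and kh: "g_tgt G k = g_tgt G h"
  shows "good E (g_cmp G k (g_inv G h))"
proof -
  from gk obtain \<theta> where k: "k \<in> g_ar G" and t\<theta>: "ty G \<theta> = Some (k # E, [])"
    and h\<theta>: "Cmp \<theta> (Tns (Lco k) (Idt E)) \<approx> Epsl E" unfolding good_def by blast
  from dup[OF eE E] obtain D where tD: "ty G D = Some (E, e # E)"
    and hD: "Cmp (Tns (Eps e) (Idt E)) D \<approx> Idt E" by blast
  have he: "h \<in> g_ar G" "e \<in> g_ar G" using ty_ar[OF sg] by auto
  define K where "K = g_cmp G k (g_inv G h)"
  have KA: "K \<in> g_ar G" and tK: "g_tgt G K = g_src G h" unfolding K_def using k he kh by auto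
  have cK: "g_cmp G K h = k" unfolding K_def using k he kh
    by (simp add: assoc) (metis cmp_ide_r)
  note tys = E k t\<theta> tD he KA tK cK sg
  let ?M = "Cmp (Mul K h) (Tns (Idt [K]) \<sigma>)"
  have ir: "Cmp (Mul K h) (Tns (Lco K) (Idt [h])) \<approx> Cmp (Lco k) (Eps h)"
  proof -
    have "ax G (Cmp (Mul K h) (Tns (Lco K) (Idt [h]))) (Cmp (Lco k) (Eps h))"
      using ax.i_right[of G K h, unfolded i1_def] cK by simp
    then show ?thesis by (rule hax[where X="([h],[k])"]) (simp_all add: tys)
  qed
  have Z4: "Cmp (Tns (Idt [K]) \<sigma>) (Tns (Lco K) (Idt [e])) \<approx> Cmp (Tns (Lco K) (Idt [h])) \<sigma>"
  proof -
    have "Cmp (Tns (Idt [K]) \<sigma>) (Tns (Lco K) (Idt [e])) \<approx> Tns (Cmp (Idt [K]) (Lco K)) (Cmp \<sigma> (Idt [e]))"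
      by (rule xchg'[where A="[]" and B="[K]" and C="[K]" and A'="[e]" and B'="[e]" and C'="[h]"]) (simp_all add: tys)
    also have "\<dots> \<approx> Tns (Lco K) \<sigma>"
      by (rule htns, rule idl[where A="[]"], simp add: tys, rule idr, simp add: tys)
    also have "\<dots> \<approx> Cmp (Tns (Lco K) (Idt [h])) (Tns (Idt []) \<sigma>)"
      by (rule TS1[where A="[]" and B="[K]" and C="[e]" and D="[h]"]) (simp_all add: tys)
    also have "\<dots> \<approx> Cmp (Tns (Lco K) (Idt [h])) \<sigma>"
      by (rule cmpR, rule unitl[where A="[e]" and B="[h]"]) (simp_all add: tys)
    finally show ?thesis .
  qed
  have Z3: "Cmp ?M (Tns (Lco K) (Idt [e])) \<approx> Cmp (Lco k) (Eps e)"
  proof -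
    have "Cmp ?M (Tns (Lco K) (Idt [e])) \<approx> Cmp (Mul K h) (Cmp (Tns (Idt [K]) \<sigma>) (Tns (Lco K) (Idt [e])))"
      by (rule cassoc[where A="[e]" and B="[K,e]" and C="[K,h]" and D="[k]"]) (simp_all add: tys)
    also have "\<dots> \<approx> Cmp (Mul K h) (Cmp (Tns (Lco K) (Idt [h])) \<sigma>)"
      by (rule cmpR, rule Z4) (simp_all add: tys)
    also have "\<dots> \<approx> Cmp (Cmp (Mul K h) (Tns (Lco K) (Idt [h]))) \<sigma>"
      by (rule hsym, rule cassoc[where A="[e]" and B="[h]" and C="[K,h]" and D="[k]"]) (simp_all add: tys)
    also have "\<dots> \<approx> Cmp (Cmp (Lco k) (Eps h)) \<sigma>"
      by (rule cmpL, rule ir) (simp_all add: tys)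
    also have "\<dots> \<approx> Cmp (Lco k) (Cmp (Eps h) \<sigma>)"
      by (rule cassoc[where A="[e]" and B="[h]" and C="[]" and D="[k]"]) (simp_all add: tys)
    also have "\<dots> \<approx> Cmp (Lco k) (Eps e)"
      by (rule cmpR, rule sh) (simp_all add: tys)
    finally show ?thesis .
  qed
  have monid1: "Tns (Idt [e]) (Idt E) \<approx> Idt (e # E)" using monid[of "[e]" E] tys by simp
  have Z2: "Cmp (Tns ?M (Idt E)) (Tns (Lco K) (Idt (e # E))) \<approx> Cmp (Tns (Lco k) (Idt E)) (Tns (Eps e) (Idt E))"
  proof -
    have "Cmp (Tns ?M (Idt E)) (Tns (Lco K) (Idt (e # E))) \<approx> Cmp (Tns ?M (Idt E)) (Tns (Lco K) (Tns (Idt [e]) (Idt E)))"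
      by (rule cmpR, rule tnsR, rule hsym[OF monid1]) (simp_all add: tys)
    also have "\<dots> \<approx> Cmp (Tns ?M (Idt E)) (Tns (Tns (Lco K) (Idt [e])) (Idt E))"
      by (rule cmpR, rule hsym, rule tassoc[where A="[]" and B="[K]" and C="[e]" and D="[e]" and E=E and F=E]) (simp_all add: tys)
    also have "\<dots> \<approx> Tns (Cmp ?M (Tns (Lco K) (Idt [e]))) (Cmp (Idt E) (Idt E))"
      by (rule xchg'[where A="[e]" and B="[K,e]" and C="[k]" and A'=E and B'=E and C'=E]) (simp_all add: tys)
    also have "\<dots> \<approx> Tns (Cmp (Lco k) (Eps e)) (Idt E)"
      by (rule htns[OF Z3], rule idl[where A=E]) (simp add: tys)
    also have "\<dots> \<approx> Cmp (Tns (Lco k) (Idt E)) (Tns (Eps e) (Idt E))"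
      by (rule TC1[where X="[e]" and Y="[]" and Z="[k]"]) (simp_all add: tys)
    finally show ?thesis .
  qed
  have Z1: "Cmp (Tns (Idt [K]) D) (Tns (Lco K) (Idt E)) \<approx> Cmp (Tns (Lco K) (Idt (e # E))) D"
  proof -
    have "Cmp (Tns (Idt [K]) D) (Tns (Lco K) (Idt E)) \<approx> Tns (Cmp (Idt [K]) (Lco K)) (Cmp D (Idt E))"
      by (rule xchg'[where A="[]" and B="[K]" and C="[K]" and A'=E and B'=E and C'="e#E"]) (simp_all add: tys)
    also have "\<dots> \<approx> Tns (Lco K) D"
      by (rule htns, rule idl[where A="[]"], simp add: tys, rule idr, simp add: tys)
    also have "\<dots> \<approx> Cmp (Tns (Lco K) (Idt (e # E))) (Tns (Idt []) D)"
      by (rule TS1[where A="[]" and B="[K]" and C=E and D="e#E"]) (simp_all add: tys)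
    also have "\<dots> \<approx> Cmp (Tns (Lco K) (Idt (e # E))) D"
      by (rule cmpR, rule unitl[where A=E and B="e#E"]) (simp_all add: tys)
    finally show ?thesis .
  qed
  let ?N = "Tns ?M (Idt E)" and ?TD = "Tns (Idt [K]) D" and ?LK = "Tns (Lco K) (Idt E)"
  let ?th = "Cmp \<theta> (Cmp ?N ?TD)"
  have "Cmp ?th ?LK \<approx> Cmp \<theta> (Cmp (Cmp ?N ?TD) ?LK)"
    by (rule cassoc[where A=E and B="K#E" and C="k#E" and D="[]"]) (simp_all add: tys)
  also have "\<dots> \<approx> Cmp \<theta> (Cmp ?N (Cmp ?TD ?LK))"
    by (rule cmpR, rule cassoc[where A=E and B="K#E" and C="K#e#E" and D="k#E"]) (simp_all add: tys)
  also have "\<dots> \<approx> Cmp \<theta> (Cmp ?N (Cmp (Tns (Lco K) (Idt (e # E))) D))"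
    by (rule cmpR, rule cmpR, rule Z1) (simp_all add: tys)
  also have "\<dots> \<approx> Cmp \<theta> (Cmp (Cmp ?N (Tns (Lco K) (Idt (e # E)))) D)"
    by (rule cmpR, rule hsym, rule cassoc[where A=E and B="e#E" and C="K#e#E" and D="k#E"]) (simp_all add: tys)
  also have "\<dots> \<approx> Cmp \<theta> (Cmp (Cmp (Tns (Lco k) (Idt E)) (Tns (Eps e) (Idt E))) D)"
    by (rule cmpR, rule cmpL, rule Z2) (simp_all add: tys)
  also have "\<dots> \<approx> Cmp \<theta> (Cmp (Tns (Lco k) (Idt E)) (Cmp (Tns (Eps e) (Idt E)) D))"
    by (rule cmpR, rule cassoc[where A=E and B="e#E" and C=E and D="k#E"]) (simp_all add: tys)
  also have "\<dots> \<approx> Cmp \<theta> (Cmp (Tns (Lco k) (Idt E)) (Idt E))"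
    by (rule cmpR, rule cmpR, rule hD) (simp_all add: tys)
  also have "\<dots> \<approx> Cmp \<theta> (Tns (Lco k) (Idt E))"
    by (rule cmpR, rule idr[where B="k#E"]) (simp_all add: tys)
  also have "\<dots> \<approx> Epsl E" by (rule h\<theta>)
  finally have fin: "Cmp ?th (Tns (Lco K) (Idt E)) \<approx> Epsl E" .
  have tth: "ty G ?th = Some (K # E, [])" by (simp add: tys)
  show ?thesis unfolding K_def[symmetric] good_def using KA tth fin by blast
qed

lemma gen_ar: "a \<in> gen_closure G X \<Longrightarrow> a \<in> g_ar G"
  by (induction rule: gen_closure.induct) auto

lemma gen_src: "a \<in> gen_closure G X \<Longrightarrow> g_src G a \<in> g_ob G"
  using gen_ar by auto

lemma gen_mono: "a \<in> gen_closure G X \<Longrightarrow> X \<inter> g_ar G \<subseteq> Y \<Longrightarrow> a \<in> gen_closure G Y"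
  by (induction rule: gen_closure.induct) (auto intro: gen_closure.intros)

lemma gen_good: "a \<in> gen_closure G (set E) \<Longrightarrow> set E \<subseteq> g_ar G \<Longrightarrow> good E k \<Longrightarrow> g_tgt G k = g_src G a \<Longrightarrow>
   good E (g_cmp G k a)"
proof (induction arbitrary: k rule: gen_closure.induct)
  case (gc_ide i)
  then have "k \<in> g_ar G" unfolding good_def by blast
  then show ?case using gc_ide by (metis cmp_ide_r src_ide)
next
  case (gc_gen x)
  have "good E (g_cmp G k (g_inv G (g_inv G x)))"
    by (rule good_step[where e=x and \<sigma>="Ant x"]) (use gc_gen epsS in auto)
  then show ?case using gc_gen by simp
next
  case (gc_inv x)
  show ?case
    by (rule good_step[where e=x and \<sigma>="Idt [x]"]) (use gc_inv idr[of "Eps x" "[x]" "[]"] in auto)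
next
  case (gc_cmp a b)
  have a: "a \<in> g_ar G" and b: "b \<in> g_ar G" using gc_cmp gen_ar by blast+
  have k: "k \<in> g_ar G" using gc_cmp unfolding good_def by blast
  have tk: "g_tgt G k = g_src G a" using gc_cmp a b by simp
  have "good E (g_cmp G k a)" using gc_cmp.IH(1)[OF gc_cmp.prems(1,2) tk] .
  moreover have "g_tgt G (g_cmp G k a) = g_src G b" using a k gc_cmp tk by simp
  ultimately have "good E (g_cmp G (g_cmp G k a) b)" using gc_cmp.IH(2) gc_cmp.prems(1) by blast
  then show ?case using a b k gc_cmp tk by (simp add: assoc)
qed

end

theorem lemma8p5:
  fixes G :: "('o, 'm) grpd" and F :: "('o, 'm) hterm"
  assumes "groupoid G" and "connected G"
    and "wt G F [] []"
    and "complete G F"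
  shows "\<forall>g\<in>g_ar G. \<exists>F'. wt G F' [g] [] \<and> heq G F (Cmp F' (Lco g))"
proof
  fix g assume g: "g \<in> g_ar G"
  interpret GP G using assms(1) by unfold_locales
  have tF: "ty G F = Some ([], [])" using assms(3) by (simp add: wt_ty)
  then have "cutp F (labels G F)" by (intro cut_all) simp
  then obtain A B E Q where tF': "ty G F = Some (A, B)" and tQ: "ty G Q = Some (A, E @ B)"
    and hF: "F \<approx> Cmp (Tns (Epsl E) (Idt B)) Q" and lE: "labels G F \<subseteq> set E"
    unfolding cutp_def by blast
  have AB: "A = []" "B = []" using tF tF' by auto
  note tQ = tQ[unfolded AB, simplified] and hF = hF[unfolded AB]
  have E: "set E \<subseteq> g_ar G" using ty_ar[OF tQ] by simp
  have "g \<in> gen_closure G (labels G F)" using assms(4) g unfolding complete_def by blast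
  then have gE: "g \<in> gen_closure G (set E)" by (rule gen_mono) (use lE in blast)
  have "good E (g_ide G (g_src G g))" using E g by (intro good_ide) auto
  then have "good E (g_cmp G (g_ide G (g_src G g)) g)" using gE E g by (intro gen_good) auto
  then have "good E g" using g by simp
  then obtain \<theta> where t\<theta>: "ty G \<theta> = Some (g # E, [])"
    and h\<theta>: "Cmp \<theta> (Tns (Lco g) (Idt E)) \<approx> Epsl E" unfolding good_def by blast
  note tys = g E tQ t\<theta>
  have W: "Cmp (Tns (Lco g) (Idt E)) Q \<approx> Cmp (Tns (Idt [g]) Q) (Lco g)"
  proof -
    have "Cmp (Tns (Lco g) (Idt E)) Q \<approx> Cmp (Tns (Lco g) (Idt E)) (Tns (Idt []) Q)"
      by (rule cmpR, rule hsym, rule unitl[where A="[]" and B=E]) (simp_all add: tys)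
    also have "\<dots> \<approx> Tns (Cmp (Lco g) (Idt [])) (Cmp (Idt E) Q)"
      by (rule xchg'[where A="[]" and B="[]" and C="[g]" and A'="[]" and B'=E and C'=E]) (simp_all add: tys)
    also have "\<dots> \<approx> Tns (Lco g) Q"
      by (rule htns, rule idr[where B="[g]"], simp add: tys, rule idl[where A="[]"], simp add: tys)
    also have "\<dots> \<approx> Cmp (Tns (Idt [g]) Q) (Tns (Lco g) (Idt []))"
      by (rule TS2[where A="[]" and B="[g]" and C="[]" and D=E]) (simp_all add: tys)
    also have "\<dots> \<approx> Cmp (Tns (Idt [g]) Q) (Lco g)"
      by (rule cmpR, rule unitr[where A="[]" and B="[g]"]) (simp_all add: tys)
    finally show ?thesis .
  qed
  have "F \<approx> Cmp (Tns (Epsl E) (Idt [])) Q" by (rule hF)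
  also have "\<dots> \<approx> Cmp (Epsl E) Q"
    by (rule cmpL, rule unitr[where A=E and B="[]"]) (simp_all add: tys)
  also have "\<dots> \<approx> Cmp (Cmp \<theta> (Tns (Lco g) (Idt E))) Q"
    by (rule cmpL, rule hsym[OF h\<theta>]) (simp_all add: tys)
  also have "\<dots> \<approx> Cmp \<theta> (Cmp (Tns (Lco g) (Idt E)) Q)"
    by (rule cassoc[where A="[]" and B=E and C="g#E" and D="[]"]) (simp_all add: tys)
  also have "\<dots> \<approx> Cmp \<theta> (Cmp (Tns (Idt [g]) Q) (Lco g))"
    by (rule cmpR, rule W) (simp_all add: tys)
  also have "\<dots> \<approx> Cmp (Cmp \<theta> (Tns (Idt [g]) Q)) (Lco g)"
    by (rule hsym, rule cassoc[where A="[]" and B="[g]" and C="g#E" and D="[]"]) (simp_all add: tys)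
  finally have fin: "F \<approx> Cmp (Cmp \<theta> (Tns (Idt [g]) Q)) (Lco g)" .
  have "wt G (Cmp \<theta> (Tns (Idt [g]) Q)) [g] []" by (simp add: wt_ty tys)
  then show "\<exists>F'. wt G F' [g] [] \<and> heq G F (Cmp F' (Lco g))" using fin by blast
qed

end
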